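(* Let $X, Y$ be finite input sets and $\mathcal{A}, \mathcal{B}$ finite output sets. Let $G$ be a bipartite Bell expression $G(Q) = \sum_{a\in\mathcal{A},b\in\mathcal{B},x\in X,y\in Y} \alpha_{a,b,x,y}\, Q(a,b|x,y)$ with coefficients $\alpha_{a,b,x,y}\ge 0$, normalized so that its classical (local) value satisfies $\omega_c(G)\le 1$. Let $\omega_{ns}(G)$ denote the maximum of $G(Q)$ over all bipartite no-signaling boxes $Q$. Then there exists a tripartite relativistic causal box $\{P(a,b,c|x,y,z)\}$ with $a,c\in\mathcal{A}$, $b\in\mathcal{B}$, $x,z\in X$, $y\in Y$ such that $$\sum_{a,b,x,y}\alpha_{a,b,x,y}\,P_{AB}(a,b|x,y)=\omega_{ns}(G)\quad\text{and}\quad \sum_{c,b,z,y}\alpha_{c,b,z,y}\,P_{CB}(c,b|z,y)=\omega_{ns}(G),$$ where $P_{AB}(a,b|x,y)=\sum_c P(a,b,c|x,y,z)$ and $P_{CB}(c,b|z,y)=\sum_a P(a,b,c|x,y,z)$ (both well defined by the relativistic causal constraints). That is, both pairs Alice–Bob and Bob–Charlie (with Charlie playing Alice's role) simultaneously attain the maximal no-signaling value of $G$.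
   Context: A bipartite box $\{Q(a,b|x,y)\}$ is a family of probability distributions over $(a,b)$ indexed by $(x,y)$; it is no-signaling if $\sum_b Q(a,b|x,y)$ is independent of $y$ and $\sum_a Q(a,b|x,y)$ is independent of $x$. The classical value $\omega_c(G)$ is the maximum of $G$ over local (convex mixtures of deterministic product) boxes. A tripartite box $\{P(a,b,c|x,y,z)\}$ (nonnegative, with $\sum_{a,b,c}P(a,b,c|x,y,z)=1$ for all $x,y,z$) is called relativistic causal (for the measurement configuration in which Bob's input may influence the correlations between Alice and Charlie) if it satisfies: (i) $\sum_a P(a,b,c|x,y,z)$ is independent of $x$ for all $y,z,b,c$; (ii) $\sum_c P(a,b,c|x,y,z)$ is independent of $z$ for all $x,y,a,b$; (iii) $\sum_{b,c} P(a,b,c|x,y,z)$ is independent of $(y,z)$ for all $x,a$; (iv) $\sum_{a,b} P(a,b,c|x,y,z)$ is independent of $(x,y)$ for all $z,c$. (Unlike full no-signaling, $\sum_b P(a,b,c|x,y,z)$ is not required to be independent of $y$.) *)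

theory Defs
  imports Complex_Main
begin

definition box2 :: "('a::finite \<Rightarrow> 'b::finite \<Rightarrow> 'x::finite \<Rightarrow> 'y::finite \<Rightarrow> real) \<Rightarrow> bool" where
  "box2 Q \<longleftrightarrow> (\<forall>a b x y. Q a b x y \<ge> 0) \<and> (\<forall>x y. (\<Sum>a\<in>UNIV. \<Sum>b\<in>UNIV. Q a b x y) = 1)"

definition no_signaling2 :: "('a::finite \<Rightarrow> 'b::finite \<Rightarrow> 'x::finite \<Rightarrow> 'y::finite \<Rightarrow> real) \<Rightarrow> bool" where
  "no_signaling2 Q \<longleftrightarrow> box2 Q \<and>
     (\<forall>a x y y'. (\<Sum>b\<in>UNIV. Q a b x y) = (\<Sum>b\<in>UNIV. Q a b x y')) \<and>
     (\<forall>b x x' y. (\<Sum>a\<in>UNIV. Q a b x y) = (\<Sum>a\<in>UNIV. Q a b x' y))"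

text \<open>Local boxes: convex mixtures of deterministic product boxes, indexed by pairs of
  deterministic strategies (f,g) with f : X \<rightarrow> A, g : Y \<rightarrow> B.\<close>

definition local_box2 :: "('a::finite \<Rightarrow> 'b::finite \<Rightarrow> 'x::finite \<Rightarrow> 'y::finite \<Rightarrow> real) \<Rightarrow> bool" where
  "local_box2 Q \<longleftrightarrow> (\<exists>w :: ('x \<Rightarrow> 'a) \<Rightarrow> ('y \<Rightarrow> 'b) \<Rightarrow> real.
      (\<forall>f g. w f g \<ge> 0) \<and> (\<Sum>f\<in>UNIV. \<Sum>g\<in>UNIV. w f g) = 1 \<and>
      (\<forall>a b x y. Q a b x y =
         (\<Sum>f\<in>UNIV. \<Sum>g\<in>UNIV. w f g * (if f x = a \<and> g y = b then 1 else 0))))"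

definition bell_value :: "('a::finite \<Rightarrow> 'b::finite \<Rightarrow> 'x::finite \<Rightarrow> 'y::finite \<Rightarrow> real)
     \<Rightarrow> ('a \<Rightarrow> 'b \<Rightarrow> 'x \<Rightarrow> 'y \<Rightarrow> real) \<Rightarrow> real" where
  "bell_value \<alpha> Q = (\<Sum>a\<in>UNIV. \<Sum>b\<in>UNIV. \<Sum>x\<in>UNIV. \<Sum>y\<in>UNIV. \<alpha> a b x y * Q a b x y)"

definition omega_c :: "('a::finite \<Rightarrow> 'b::finite \<Rightarrow> 'x::finite \<Rightarrow> 'y::finite \<Rightarrow> real) \<Rightarrow> real" where
  "omega_c \<alpha> = Sup {bell_value \<alpha> Q | Q. local_box2 Q}"

definition omega_ns :: "('a::finite \<Rightarrow> 'b::finite \<Rightarrow> 'x::finite \<Rightarrow> 'y::finite \<Rightarrow> real) \<Rightarrow> real" where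
  "omega_ns \<alpha> = Sup {bell_value \<alpha> Q | Q. no_signaling2 Q}"

definition box3 :: "('a::finite \<Rightarrow> 'b::finite \<Rightarrow> 'c::finite \<Rightarrow> 'x \<Rightarrow> 'y \<Rightarrow> 'z \<Rightarrow> real) \<Rightarrow> bool" where
  "box3 P \<longleftrightarrow> (\<forall>a b c x y z. P a b c x y z \<ge> 0) \<and>
     (\<forall>x y z. (\<Sum>a\<in>UNIV. \<Sum>b\<in>UNIV. \<Sum>c\<in>UNIV. P a b c x y z) = 1)"

definition rel_causal :: "('a::finite \<Rightarrow> 'b::finite \<Rightarrow> 'c::finite \<Rightarrow> 'x \<Rightarrow> 'y \<Rightarrow> 'z \<Rightarrow> real) \<Rightarrow> bool" where
  "rel_causal P \<longleftrightarrow> box3 P \<and>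
     (\<forall>b c x x' y z. (\<Sum>a\<in>UNIV. P a b c x y z) = (\<Sum>a\<in>UNIV. P a b c x' y z)) \<and>
     (\<forall>a b x y z z'. (\<Sum>c\<in>UNIV. P a b c x y z) = (\<Sum>c\<in>UNIV. P a b c x y z')) \<and>
     (\<forall>a x y y' z z'. (\<Sum>b\<in>UNIV. \<Sum>c\<in>UNIV. P a b c x y z) = (\<Sum>b\<in>UNIV. \<Sum>c\<in>UNIV. P a b c x y' z')) \<and>
     (\<forall>c x x' y y' z. (\<Sum>a\<in>UNIV. \<Sum>b\<in>UNIV. P a b c x y z) = (\<Sum>a\<in>UNIV. \<Sum>b\<in>UNIV. P a b c x' y' z))"

end

theory Submission imports Defs "HOL-Analysis.Analysis" begin

definition toQ :: "real^('a::finite \<times> 'b::finite \<times> 'x::finite \<times> 'y::finite) \<Rightarrow> 'a \<Rightarrow> 'b \<Rightarrow> 'x \<Rightarrow> 'y \<Rightarrow> real" where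
  "toQ v a b x y = v $ (a,b,x,y)"

lemma ns_attained:
  fixes \<alpha> :: "'a::finite \<Rightarrow> 'b::finite \<Rightarrow> 'x::finite \<Rightarrow> 'y::finite \<Rightarrow> real"
  shows "\<exists>Q. no_signaling2 Q \<and> bell_value \<alpha> Q = omega_ns \<alpha>"
proof -
  define S :: "(real^('a \<times> 'b \<times> 'x \<times> 'y)) set" where "S = {v. no_signaling2 (toQ v)}"
  have S_eq: "S = {v. (\<forall>i. 0 \<le> v$i)} \<inter> {v. \<forall>x y. (\<Sum>a\<in>UNIV. \<Sum>b\<in>UNIV. v$(a,b,x,y)) = 1}
     \<inter> {v. \<forall>a x y y'. (\<Sum>b\<in>UNIV. v$(a,b,x,y)) = (\<Sum>b\<in>UNIV. v$(a,b,x,y'))}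
     \<inter> {v. \<forall>b x x' y. (\<Sum>a\<in>UNIV. v$(a,b,x,y)) = (\<Sum>a\<in>UNIV. v$(a,b,x',y))}"
    unfolding S_def no_signaling2_def box2_def toQ_def by auto
  have cl: "closed S"
    unfolding S_eq
    by (intro closed_Int closed_Collect_all closed_Collect_le closed_Collect_eq continuous_intros)
  have sub: "S \<subseteq> cbox 0 1"
  proof
    fix v assume "v \<in> S"
    hence ns: "no_signaling2 (toQ v)" by (simp add: S_def)
    show "v \<in> cbox 0 1" unfolding mem_box_cart
    proof
      fix i :: "'a \<times> 'b \<times> 'x \<times> 'y"
      obtain a b x y where i: "i = (a,b,x,y)" by (cases i) auto
      have nn: "\<And>a b. 0 \<le> v$(a,b,x,y)" using ns unfolding no_signaling2_def box2_def toQ_def by auto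
      have tot: "(\<Sum>a\<in>UNIV. \<Sum>b\<in>UNIV. v$(a,b,x,y)) = 1" using ns unfolding no_signaling2_def box2_def toQ_def by auto
      have "v$(a,b,x,y) \<le> (\<Sum>b'\<in>UNIV. v$(a,b',x,y))"
        by (rule member_le_sum) (auto simp: nn)
      also have "\<dots> \<le> (\<Sum>a'\<in>UNIV. \<Sum>b'\<in>UNIV. v$(a',b',x,y))"
        by (rule member_le_sum[where f="\<lambda>a'. \<Sum>b'\<in>UNIV. v$(a',b',x,y)"]) (auto intro: sum_nonneg nn)
      finally show "0 $ i \<le> v $ i \<and> v $ i \<le> 1 $ i" using tot nn i by simp
    qed
  qed
  have comp: "compact S"
    using cl sub by (metis bounded_cbox bounded_subset compact_eq_bounded_closed)
  define u :: "real^('a \<times> 'b \<times> 'x \<times> 'y)" where "u = (\<chi> i. 1 / (real CARD('a) * real CARD('b)))"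
  have "u \<in> S"
    unfolding S_eq u_def by simp
  hence ne: "S \<noteq> {}" by auto
  have cont: "continuous_on S (\<lambda>v. bell_value \<alpha> (toQ v))"
    unfolding bell_value_def toQ_def by (intro continuous_intros)
  obtain v where vS: "v \<in> S" and vmax: "\<forall>w\<in>S. bell_value \<alpha> (toQ w) \<le> bell_value \<alpha> (toQ v)"
    using continuous_attains_sup[OF comp ne cont] by blast
  have toQ_chi: "\<And>Q. toQ (\<chi> i. case i of (a,b,x,y) \<Rightarrow> Q a b x y) = Q"
    by (auto simp: toQ_def fun_eq_iff)
  have "omega_ns \<alpha> = bell_value \<alpha> (toQ v)"
    unfolding omega_ns_def
  proof (rule cSup_eq_maximum)
    show "bell_value \<alpha> (toQ v) \<in> {bell_value \<alpha> Q |Q. no_signaling2 Q}"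
      using vS by (auto simp: S_def)
  next
    fix t assume "t \<in> {bell_value \<alpha> Q |Q. no_signaling2 Q}"
    then obtain Q where t: "t = bell_value \<alpha> Q" and Q: "no_signaling2 Q" by auto
    have "(\<chi> i. case i of (a,b,x,y) \<Rightarrow> Q a b x y) \<in> S" using Q by (simp add: S_def toQ_chi)
    with vmax have "bell_value \<alpha> (toQ (\<chi> i. case i of (a,b,x,y) \<Rightarrow> Q a b x y)) \<le> bell_value \<alpha> (toQ v)" by blast
    thus "t \<le> bell_value \<alpha> (toQ v)" by (simp add: toQ_chi t)
  qed
  thus ?thesis using vS by (auto simp: S_def)
qed


theorem proposition1:
  fixes \<alpha> :: "'a::finite \<Rightarrow> 'b::finite \<Rightarrow> 'x::finite \<Rightarrow> 'y::finite \<Rightarrow> real"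
  assumes nonneg: "\<forall>a b x y. \<alpha> a b x y \<ge> 0"
    and classical: "omega_c \<alpha> \<le> 1"
  shows "\<exists>P :: 'a \<Rightarrow> 'b \<Rightarrow> 'a \<Rightarrow> 'x \<Rightarrow> 'y \<Rightarrow> 'x \<Rightarrow> real.
           rel_causal P \<and>
           (\<forall>z. (\<Sum>a\<in>UNIV. \<Sum>b\<in>UNIV. \<Sum>x\<in>UNIV. \<Sum>y\<in>UNIV.
                    \<alpha> a b x y * (\<Sum>c\<in>UNIV. P a b c x y z)) = omega_ns \<alpha>) \<and>
           (\<forall>x. (\<Sum>c\<in>UNIV. \<Sum>b\<in>UNIV. \<Sum>z\<in>UNIV. \<Sum>y\<in>UNIV.
                    \<alpha> c b z y * (\<Sum>a\<in>UNIV. P a b c x y z)) = omega_ns \<alpha>)"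
proof -
  obtain Q where ns: "no_signaling2 Q" and val: "bell_value \<alpha> Q = omega_ns \<alpha>"
    using ns_attained by blast
  have nn: "\<And>a b x y. 0 \<le> Q a b x y" and tot: "\<And>x y. (\<Sum>a\<in>UNIV. \<Sum>b\<in>UNIV. Q a b x y) = 1"
    and nsA: "\<And>a x y y'. (\<Sum>b\<in>UNIV. Q a b x y) = (\<Sum>b\<in>UNIV. Q a b x y')"
    and nsB: "\<And>b x x' y. (\<Sum>a\<in>UNIV. Q a b x y) = (\<Sum>a\<in>UNIV. Q a b x' y)"
    using ns unfolding no_signaling2_def box2_def by auto
  define QB where "QB b y = (\<Sum>a\<in>UNIV. Q a b undefined y)" for b y
  have QB: "\<And>x b y. (\<Sum>a\<in>UNIV. Q a b x y) = QB b y" unfolding QB_def using nsB by blast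
  have QBnn: "\<And>b y. 0 \<le> QB b y" unfolding QB_def by (intro sum_nonneg nn)
  have le: "\<And>a b x y. Q a b x y \<le> QB b y"
    by (metis QB nn finite UNIV_I member_le_sum)
  define P :: "'a \<Rightarrow> 'b \<Rightarrow> 'a \<Rightarrow> 'x \<Rightarrow> 'y \<Rightarrow> 'x \<Rightarrow> real"
    where "P a b c x y z = (if QB b y = 0 then 0 else Q a b x y * Q c b z y / QB b y)" for a b c x y z
  have sc: "(\<Sum>c\<in>UNIV. P a b c x y z) = Q a b x y" for a b x y z
  proof (cases "QB b y = 0")
    case True
    then show ?thesis using le[of a b x y] nn[of a b x y] by (simp add: P_def)
  next
    case False
    have "(\<Sum>c\<in>UNIV. P a b c x y z) = Q a b x y * (\<Sum>c\<in>UNIV. Q c b z y) / QB b y"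
      using False by (simp add: P_def sum_distrib_left sum_divide_distrib)
    also have "\<dots> = Q a b x y" using False QB[of b z y] by simp
    finally show ?thesis .
  qed
  have sa: "(\<Sum>a\<in>UNIV. P a b c x y z) = Q c b z y" for c b x y z
  proof (cases "QB b y = 0")
    case True
    then show ?thesis using le[of c b z y] nn[of c b z y] by (simp add: P_def)
  next
    case False
    have "(\<Sum>a\<in>UNIV. P a b c x y z) = (\<Sum>a\<in>UNIV. Q a b x y) * Q c b z y / QB b y"
      using False by (simp add: P_def sum_distrib_right sum_divide_distrib)
    also have "\<dots> = Q c b z y" using False QB[of b x y] by simp
    finally show ?thesis .
  qed
  have sab: "(\<Sum>a\<in>UNIV. \<Sum>b\<in>UNIV. P a b c x y z) = (\<Sum>b\<in>UNIV. Q c b z y)" for c x y z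
    by (subst sum.swap) (simp add: sa)
  have rc: "rel_causal P"
  proof -
    have "\<forall>a b c x y z. P a b c x y z \<ge> 0"
      using nn QBnn by (auto simp: P_def intro!: divide_nonneg_nonneg mult_nonneg_nonneg)
    moreover have "\<forall>x y z. (\<Sum>a\<in>UNIV. \<Sum>b\<in>UNIV. \<Sum>c\<in>UNIV. P a b c x y z) = 1"
      by (simp only: sc tot) simp
    moreover have "\<forall>a x y y' z z'. (\<Sum>b\<in>UNIV. \<Sum>c\<in>UNIV. P a b c x y z) = (\<Sum>b\<in>UNIV. \<Sum>c\<in>UNIV. P a b c x y' z')"
      by (simp only: sc) (metis nsA)
    moreover have "\<forall>c x x' y y' z. (\<Sum>a\<in>UNIV. \<Sum>b\<in>UNIV. P a b c x y z) = (\<Sum>a\<in>UNIV. \<Sum>b\<in>UNIV. P a b c x' y' z)"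
      by (simp only: sab) (metis nsA)
    ultimately show ?thesis unfolding rel_causal_def box3_def by (simp only: sa sc) simp
  qed
  show ?thesis
    using rc val by (auto simp: sc sa bell_value_def)
qed

end
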